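(* Let $b\ge1$, $k\ge 0$. For $S\in\mathrm{SYT}^{+k}((b,b))$ define the path $\beta(S)$ of length $2b+k$ whose $j$-th step ($j\in[2b+k]$) is: an up step $U$ if $j$ is the minimum of the set in some top-row cell; a down step $D$ if $j$ is the minimum of the set in some bottom-row cell; an umber horizontal step if $j$ is a non-minimal element of a top-row cell; a denim horizontal step if $j$ is a non-minimal element of a bottom-row cell. Then $\beta$ is a bijection from $\mathrm{SYT}^{+k}((b,b))$ onto the set of paths in $\mathrm{Motz}^{\{1,2\}}(2b+k)$ having exactly $k$ horizontal steps.
   Context: $\mathrm{SYT}^{+k}(\lambda)$: for a partition $\lambda$ of $N$ and $k\ge 0$, the set of fillings of the cells of $\lambda$ by nonempty sets of positive integers forming a set partition of $[N+k]$, with $\max S(u)<\min S(v)$ whenever $u\ne v$ and $u$ is weakly northwest of $v$. A bicolored Motzkin path of length $n$ is a lattice path from $(0,0)$ to $(n,0)$ with steps $U=(1,1)$, $D=(1,-1)$ and horizontal steps $(1,0)$, each horizontal step colored either umber ($u$) or denim ($d$), never going below the $x$-axis. $\mathrm{Motz}^{\{1,2\}}(n)$ is the set of such paths satisfying both: (1) no umber step occurs at height $0$; (2) no denim step occurs before the first down step. *)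

theory Defs
  imports Main
begin

text \<open>A partition is given by its list of row lengths (weakly decreasing, positive).
  Cells are pairs (row, column), 0-indexed, row 0 on top (English convention).\<close>

definition cells :: "nat list \<Rightarrow> (nat \<times> nat) set" where
  "cells lam = {(i, j). i < length lam \<and> j < lam ! i}"

definition weakly_nw :: "nat \<times> nat \<Rightarrow> nat \<times> nat \<Rightarrow> bool" where
  "weakly_nw u v \<longleftrightarrow> fst u \<le> fst v \<and> snd u \<le> snd v"

text \<open>Fillings are total functions, required to be empty outside the diagram.\<close>

definition SYT_plus :: "nat \<Rightarrow> nat list \<Rightarrow> ((nat \<times> nat) \<Rightarrow> nat set) set" where
  "SYT_plus k lam = {S.
     (\<forall>c\<in>cells lam. S c \<noteq> {}) \<and>
     (\<forall>c. c \<notin> cells lam \<longrightarrow> S c = {}) \<and>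
     (\<forall>c\<in>cells lam. \<forall>d\<in>cells lam. c \<noteq> d \<longrightarrow> S c \<inter> S d = {}) \<and>
     (\<Union>c\<in>cells lam. S c) = {1..sum_list lam + k} \<and>
     (\<forall>u\<in>cells lam. \<forall>v\<in>cells lam. u \<noteq> v \<and> weakly_nw u v \<longrightarrow> Max (S u) < Min (S v))}"

datatype step = U | D | Hu | Hd

fun step_ht :: "step \<Rightarrow> int" where
  "step_ht U = 1" | "step_ht D = -1" | "step_ht Hu = 0" | "step_ht Hd = 0"

definition height :: "step list \<Rightarrow> int" where
  "height p = sum_list (map step_ht p)"

text \<open>Bicolored Motzkin paths of length n (Hu = umber, Hd = denim horizontal step).\<close>

definition motzkin :: "nat \<Rightarrow> step list \<Rightarrow> bool" where
  "motzkin n p \<longleftrightarrow> length p = n \<and> (\<forall>i\<le>length p. height (take i p) \<ge> 0) \<and> height p = 0"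

definition Motz12 :: "nat \<Rightarrow> step list set" where
  "Motz12 n = {p. motzkin n p \<and>
     (\<forall>i<length p. p ! i = Hu \<longrightarrow> height (take i p) \<noteq> 0) \<and>
     (\<forall>i<length p. p ! i = Hd \<longrightarrow> (\<exists>j<i. p ! j = D))}"

definition num_horiz :: "step list \<Rightarrow> nat" where
  "num_horiz p = length (filter (\<lambda>s. s = Hu \<or> s = Hd) p)"

text \<open>The map beta for shape (b,b): the j-th step (j = 1..2b+k) is list entry j-1.\<close>

definition beta_step :: "nat \<Rightarrow> ((nat \<times> nat) \<Rightarrow> nat set) \<Rightarrow> nat \<Rightarrow> step" where
  "beta_step b S j =
     (if \<exists>c<b. j = Min (S (0, c)) then U
      else if \<exists>c<b. j = Min (S (1, c)) then D
      else if \<exists>c<b. j \<in> S (0, c) then Hu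
      else Hd)"

definition beta :: "nat \<Rightarrow> nat \<Rightarrow> ((nat \<times> nat) \<Rightarrow> nat set) \<Rightarrow> step list" where
  "beta b k S = map (beta_step b S) [1..<2 * b + k + 1]"

end

theory Submission
  imports Defs
begin


definition cnt :: "(step \<Rightarrow> bool) \<Rightarrow> step list \<Rightarrow> nat \<Rightarrow> nat" where
  "cnt P xs j = length (filter P (take j xs))"

lemma cnt_0[simp]: "cnt P xs 0 = 0" by (simp add: cnt_def)

lemma cnt_Suc: "j < length xs \<Longrightarrow> cnt P xs (Suc j) = cnt P xs j + (if P (xs!j) then 1 else 0)"
  by (simp add: cnt_def take_Suc_conv_app_nth)

lemma cnt_mono: "i \<le> j \<Longrightarrow> cnt P xs i \<le> cnt P xs j"
proof -
  assume "i \<le> j"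
  then obtain d where "j = i + d" using le_Suc_ex by blast
  then show ?thesis by (simp add: cnt_def take_add)
qed

lemma sum_ht: "sum_list (map step_ht xs) = int (length (filter (\<lambda>s. s = U) xs)) - int (length (filter (\<lambda>s. s = D) xs))"
  by (induction xs) (auto elim: step_ht.elims, (case_tac a; simp)+)

lemma height_cnt: "height (take j xs) = int (cnt (\<lambda>s. s = U) xs j) - int (cnt (\<lambda>s. s = D) xs j)"
  by (simp add: height_def cnt_def sum_ht)

lemma len_split: "length xs = length (filter (\<lambda>s. s = U) xs) + length (filter (\<lambda>s. s = D) xs) + length (filter (\<lambda>s. s = Hu \<or> s = Hd) xs)"
  by (induction xs) (auto, (case_tac a; simp)+)

lemma exists_U: "cnt P xs j \<ge> 1 \<Longrightarrow> j \<le> length xs \<Longrightarrow> \<exists>i. 1 \<le> i \<and> i \<le> j \<and> P (xs!(i-1)) \<and> cnt P xs i = cnt P xs j"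
proof (induction j)
  case 0 then show ?case by simp
next
  case (Suc j)
  show ?case
  proof (cases "P (xs!j)")
    case True then show ?thesis by (intro exI[of _ "Suc j"]) auto
  next
    case False
    then have "cnt P xs (Suc j) = cnt P xs j" using Suc.prems cnt_Suc[of j xs P] by simp
    with Suc show ?thesis by (metis Suc_leD le_SucI)
  qed
qed

lemma reach: "f 0 = (0::nat) \<Longrightarrow> (\<And>j. f (Suc j) \<le> Suc (f j)) \<Longrightarrow> c < f N \<Longrightarrow> \<exists>j\<le>N. f j = Suc c"
proof (induction N)
  case 0 then show ?case by simp
next
  case (Suc N)
  show ?case
  proof (cases "c < f N")
    case True then show ?thesis using Suc by (meson le_SucI)
  next
    case False
    then have "f (Suc N) = Suc c" using Suc.prems(2)[of N] Suc.prems(3) by linarith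
    then show ?thesis by blast
  qed
qed

lemma cnt_map: "j \<le> n \<Longrightarrow> cnt P (map f [1..<n+1]) j = card {i. 1 \<le> i \<and> i \<le> j \<and> P (f i)}"
proof -
  assume j: "j \<le> n"
  have "take j [1..<n+1] = [1..<1+j]" using j by (intro take_upt) simp
  then have "take j (map f [1..<n+1]) = map f [1..<j+1]" by (simp add: take_map add.commute del: upt_Suc)
  then have "cnt P (map f [1..<n+1]) j = length (filter (P \<circ> f) [1..<j+1])"
    by (simp add: cnt_def filter_map)
  also have "\<dots> = card (set (filter (P \<circ> f) [1..<j+1]))"
    by (rule distinct_card[symmetric]) simp
  also have "set (filter (P \<circ> f) [1..<j+1]) = {i. 1 \<le> i \<and> i \<le> j \<and> P (f i)}" by (auto simp del: upt_Suc)
  finally show ?thesis .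
qed



lemma cells_bb: "(r, c) \<in> cells [b, b] \<longleftrightarrow> r < 2 \<and> c < b"
  by (auto simp: cells_def less_2_cases_iff nth_Cons split: nat.splits)

locale syt =
  fixes b k :: nat and S :: "nat \<times> nat \<Rightarrow> nat set"
  assumes S: "S \<in> SYT_plus k [b, b]"
begin

abbreviation "n \<equiv> 2 * b + k"
abbreviation "mt c \<equiv> Min (S (0, c))"
abbreviation "mb c \<equiv> Min (S (Suc 0, c))"
abbreviation "p \<equiv> beta b k S"

lemma ne: "r < 2 \<Longrightarrow> c < b \<Longrightarrow> S (r, c) \<noteq> {}"
  using S by (auto simp: SYT_plus_def cells_bb)

lemma out: "\<not> (r < 2 \<and> c < b) \<Longrightarrow> S (r, c) = {}"
  using S by (auto simp: SYT_plus_def cells_bb)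

lemma U_eq: "(\<Union>c\<in>cells [b,b]. S c) = {1..n}" using S by (simp add: SYT_plus_def mult_2)

lemma sub: "S (r, c) \<subseteq> {1..n}"
proof (cases "r < 2 \<and> c < b")
  case True
  then have "(r,c) \<in> cells [b,b]" by (simp add: cells_bb)
  then have "S (r, c) \<subseteq> (\<Union>c\<in>cells [b,b]. S c)" by blast
  then show ?thesis using U_eq by simp
next
  case False then show ?thesis using out by simp
qed

lemma fin: "finite (S (r, c))"
  using sub finite_subset by blast

lemma disj: "(r, c) \<noteq> (r', c') \<Longrightarrow> x \<in> S (r, c) \<Longrightarrow> x \<in> S (r', c') \<Longrightarrow> False"
proof -
  assume a: "(r, c) \<noteq> (r', c')" "x \<in> S (r, c)" "x \<in> S (r', c')"
  then have "r < 2 \<and> c < b" "r' < 2 \<and> c' < b" using out by fastforce+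
  then have c: "(r,c) \<in> cells [b,b]" "(r',c') \<in> cells [b,b]" by (auto simp: cells_bb)
  have Dj: "\<forall>c\<in>cells [b,b]. \<forall>d\<in>cells [b,b]. c \<noteq> d \<longrightarrow> S c \<inter> S d = {}"
    using S by (simp add: SYT_plus_def)
  then have "S (r,c) \<inter> S (r',c') = {}" using c a(1) by blast
  then show False using a by blast
qed

lemma cover: "j \<in> {1..n} \<Longrightarrow> \<exists>r c. r < 2 \<and> c < b \<and> j \<in> S (r, c)"
proof -
  assume "j \<in> {1..n}"
  then have "j \<in> (\<Union>c\<in>cells [b,b]. S c)" using U_eq by simp
  then obtain rc where "rc \<in> cells [b,b]" "j \<in> S rc" by blast
  then obtain r c where "(r,c) \<in> cells [b,b]" "j \<in> S (r,c)" by (cases rc) auto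
  then show ?thesis by (auto simp: cells_bb)
qed

lemma ord: "r \<le> r' \<Longrightarrow> c \<le> c' \<Longrightarrow> (r, c) \<noteq> (r', c') \<Longrightarrow> r' < 2 \<Longrightarrow> c' < b
   \<Longrightarrow> x \<in> S (r, c) \<Longrightarrow> y \<in> S (r', c') \<Longrightarrow> x < y"
proof -
  assume a: "r \<le> r'" "c \<le> c'" "(r, c) \<noteq> (r', c')" "r' < 2" "c' < b" "x \<in> S (r, c)" "y \<in> S (r', c')"
  then have c: "(r,c) \<in> cells [b,b]" "(r',c') \<in> cells [b,b]" by (auto simp: cells_bb)
  then have "Max (S (r,c)) < Min (S (r',c'))" using S a by (auto simp: SYT_plus_def weakly_nw_def)
  moreover have "x \<le> Max (S (r,c))" using a fin by simp
  moreover have "Min (S (r',c')) \<le> y" using a fin by simp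
  ultimately show ?thesis by linarith
qed

lemma mt_in: "c < b \<Longrightarrow> mt c \<in> S (0, c)" using ne fin by simp
lemma mb_in: "c < b \<Longrightarrow> mb c \<in> S (1, c)" using ne[of 1 c] fin by simp
lemma min_le: "x \<in> S (r, c) \<Longrightarrow> Min (S (r, c)) \<le> x" using fin by simp

lemma bs_top: "c < b \<Longrightarrow> j \<in> S (0, c) \<Longrightarrow> beta_step b S j = (if j = mt c then U else Hu)"
proof -
  assume a: "c < b" "j \<in> S (0, c)"
  have 1: "(\<exists>c'<b. j = mt c') \<longleftrightarrow> j = mt c"
  proof
    assume "\<exists>c'<b. j = mt c'"
    then obtain c' where c': "c' < b" "j = mt c'" by blast
    then have "j \<in> S (0, c')" using mt_in by simp
    then have "c' = c" using disj[of 0 c 0 c' j] a by auto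
    then show "j = mt c" using c' by simp
  qed (use a in auto)
  have 2: "\<not> (\<exists>c'<b. j = mb c')"
    using a mb_in disj[of 0 c 1 _ j] by auto
  show ?thesis unfolding beta_step_def using 1 2 a by auto
qed

lemma bs_bot: "c < b \<Longrightarrow> j \<in> S (1, c) \<Longrightarrow> beta_step b S j = (if j = mb c then D else Hd)"
proof -
  assume a: "c < b" "j \<in> S (1, c)"
  have 1: "(\<exists>c'<b. j = mb c') \<longleftrightarrow> j = mb c"
  proof
    assume "\<exists>c'<b. j = mb c'"
    then obtain c' where c': "c' < b" "j = mb c'" by blast
    then have "j \<in> S (1, c')" using mb_in by simp
    then have "c' = c" using disj[of 1 c 1 c' j] a by auto
    then show "j = mb c" using c' by simp
  qed (use a in auto)
  have 2: "\<not> (\<exists>c'<b. j = mt c')"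
    using a mt_in disj[of 1 c 0 _ j] by auto
  have 3: "\<not> (\<exists>c'<b. j \<in> S (0, c'))"
    using a disj[of 1 c 0 _ j] by auto
  show ?thesis unfolding beta_step_def using 1 2 3 a by auto
qed

lemma bs_U: "beta_step b S j = U \<longleftrightarrow> (\<exists>c<b. j = mt c)"
  unfolding beta_step_def by auto

lemma bs_D: "beta_step b S j = D \<longleftrightarrow> (\<exists>c<b. j = mb c)"
proof
  assume "beta_step b S j = D" then show "\<exists>c<b. j = mb c"
    unfolding beta_step_def by (auto split: if_splits)
next
  assume "\<exists>c<b. j = mb c"
  then obtain c where "c < b" "j = mb c" by blast
  then show "beta_step b S j = D" using bs_bot[of c j] mb_in by simp
qed

lemma len_p: "length p = n" by (simp add: beta_def del: upt_Suc)

lemma nth_p: "i < n \<Longrightarrow> p ! i = beta_step b S (Suc i)"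
proof -
  assume i: "i < n"
  have "[1..<n+1] ! i = 1 + i" using i by (intro nth_upt) simp
  then show ?thesis unfolding beta_def using i by (simp del: upt_Suc)
qed

lemma mt_ge1: "c < b \<Longrightarrow> 1 \<le> mt c" using mt_in sub by fastforce
lemma mb_ge1: "c < b \<Longrightarrow> 1 \<le> mb c" using mb_in sub by fastforce

lemma mt_mono: "c < c' \<Longrightarrow> c' < b \<Longrightarrow> mt c < mt c'"
  using ord[of 0 0 c c'] mt_in by simp
lemma mb_mono: "c < c' \<Longrightarrow> c' < b \<Longrightarrow> mb c < mb c'"
  using ord[of 1 1 c c'] mb_in by simp
lemma mt_mb: "c < b \<Longrightarrow> mt c < mb c"
  using ord[of 0 1 c c] mt_in mb_in by simp

lemma cU: "j \<le> n \<Longrightarrow> cnt (\<lambda>s. s = U) p j = card {c. c < b \<and> mt c \<le> j}"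
proof -
  assume j: "j \<le> n"
  have "cnt (\<lambda>s. s = U) p j = card {i. 1 \<le> i \<and> i \<le> j \<and> beta_step b S i = U}"
    unfolding beta_def using j by (rule cnt_map)
  also have "{i. 1 \<le> i \<and> i \<le> j \<and> beta_step b S i = U} = (\<lambda>c. mt c) ` {c. c < b \<and> mt c \<le> j}"
    using mt_ge1 by (auto simp: bs_U)
  also have "card \<dots> = card {c. c < b \<and> mt c \<le> j}"
  proof (rule card_image)
    show "inj_on (\<lambda>c. mt c) {c. c < b \<and> mt c \<le> j}"
      by (rule inj_onI) (metis (no_types, lifting) linorder_neqE_nat mem_Collect_eq mt_mono order_less_irrefl)
  qed
  finally show ?thesis .
qed

lemma cD: "j \<le> n \<Longrightarrow> cnt (\<lambda>s. s = D) p j = card {c. c < b \<and> mb c \<le> j}"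
proof -
  assume j: "j \<le> n"
  have "cnt (\<lambda>s. s = D) p j = card {i. 1 \<le> i \<and> i \<le> j \<and> beta_step b S i = D}"
    unfolding beta_def using j by (rule cnt_map)
  also have "{i. 1 \<le> i \<and> i \<le> j \<and> beta_step b S i = D} = (\<lambda>c. mb c) ` {c. c < b \<and> mb c \<le> j}"
    using mb_ge1 by (auto simp: bs_D)
  also have "card \<dots> = card {c. c < b \<and> mb c \<le> j}"
  proof (rule card_image)
    show "inj_on (\<lambda>c. mb c) {c. c < b \<and> mb c \<le> j}"
      by (rule inj_onI) (metis (no_types, lifting) linorder_neqE_nat mem_Collect_eq mb_mono order_less_irrefl)
  qed
  finally show ?thesis .
qed

lemma cU_top: "c < b \<Longrightarrow> j \<in> S (0, c) \<Longrightarrow> cnt (\<lambda>s. s = U) p j = Suc c"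
proof -
  assume a: "c < b" "j \<in> S (0, c)"
  then have "j \<le> n" using sub by fastforce
  have "{c'. c' < b \<and> mt c' \<le> j} = {..c}"
  proof (intro set_eqI iffI)
    fix c' assume "c' \<in> {c'. c' < b \<and> mt c' \<le> j}"
    then show "c' \<in> {..c}" using ord[of 0 0 c c' j "mt c'"] a mt_in by (cases "c' \<le> c") auto
  next
    fix c' assume "c' \<in> {..c}"
    then show "c' \<in> {c'. c' < b \<and> mt c' \<le> j}" using a mt_mono[of c' c] min_le[of j 0 c]
      by (cases "c' = c") auto
  qed
  then show ?thesis using cU \<open>j \<le> n\<close> by simp
qed

lemma cD_bot: "c < b \<Longrightarrow> j \<in> S (1, c) \<Longrightarrow> cnt (\<lambda>s. s = D) p j = Suc c"
proof -
  assume a: "c < b" "j \<in> S (1, c)"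
  then have "j \<le> n" using sub by fastforce
  have "{c'. c' < b \<and> mb c' \<le> j} = {..c}"
  proof (intro set_eqI iffI)
    fix c' assume "c' \<in> {c'. c' < b \<and> mb c' \<le> j}"
    then show "c' \<in> {..c}" using ord[of 1 1 c c' j "mb c'"] a mb_in by (cases "c' \<le> c") auto
  next
    fix c' assume "c' \<in> {..c}"
    then show "c' \<in> {c'. c' < b \<and> mb c' \<le> j}" using a mb_mono[of c' c] min_le[of j 1 c]
      by (cases "c' = c") auto
  qed
  then show ?thesis using cD \<open>j \<le> n\<close> by simp
qed

end


context syt begin

lemma fin_c: "finite {c. c < b \<and> P c}" by simp

lemma cU_n: "cnt (\<lambda>s. s = U) p n = b"
proof -
  have "{c. c < b \<and> mt c \<le> n} = {..<b}" using mt_in sub by fastforce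
  then show ?thesis using cU[of n] by simp
qed

lemma cD_n: "cnt (\<lambda>s. s = D) p n = b"
proof -
  have "{c. c < b \<and> mb c \<le> n} = {..<b}" using mb_in sub by fastforce
  then show ?thesis using cD[of n] by simp
qed

lemma take_n: "take n p = p" using len_p by simp

lemma into: "p \<in> Motz12 n \<and> num_horiz p = k"
proof -
  have h0: "height (take i p) \<ge> 0" if "i \<le> length p" for i
  proof -
    have i: "i \<le> n" using that len_p by simp
    have "{c. c < b \<and> mb c \<le> i} \<subseteq> {c. c < b \<and> mt c \<le> i}" using mt_mb by fastforce
    then have "card {c. c < b \<and> mb c \<le> i} \<le> card {c. c < b \<and> mt c \<le> i}"
      by (intro card_mono) auto
    then show ?thesis using height_cnt[of i p] cU[OF i] cD[OF i] by simp
  qed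
  have hn: "height p = 0" using height_cnt[of n p] take_n cU_n cD_n by simp
  have hu: "height (take i p) \<noteq> 0" if "i < length p" "p ! i = Hu" for i
  proof -
    have i: "i < n" using that len_p by simp
    then have bs: "beta_step b S (Suc i) = Hu" using that nth_p by simp
    obtain r c where rc: "r < 2" "c < b" "Suc i \<in> S (r, c)" using cover[of "Suc i"] i by auto
    have r0: "r = 0"
    proof (rule ccontr)
      assume "r \<noteq> 0" then have "r = 1" using rc by simp
      then show False using bs_bot[of c "Suc i"] rc bs by (simp split: if_splits)
    qed
    then have ne: "Suc i \<noteq> mt c" using bs_top[of c "Suc i"] rc bs by (simp split: if_splits)
    have "mt c \<le> Suc i" using min_le rc r0 by blast
    then have c1: "mt c \<le> i" using ne by simp
    have "Suc i < mb c" using ord[of 0 1 c c "Suc i" "mb c"] rc r0 mb_in by simp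
    then have cn: "c \<notin> {c. c < b \<and> mb c \<le> i}" by simp
    have cy: "c \<in> {c. c < b \<and> mt c \<le> i}" using c1 rc by simp
    have "{c. c < b \<and> mb c \<le> i} \<subseteq> {c. c < b \<and> mt c \<le> i}" using mt_mb by fastforce
    then have "{c. c < b \<and> mb c \<le> i} \<subset> {c. c < b \<and> mt c \<le> i}" using cn cy by blast
    then have "card {c. c < b \<and> mb c \<le> i} < card {c. c < b \<and> mt c \<le> i}"
      by (intro psubset_card_mono) auto
    then show ?thesis using height_cnt[of i p] cU[of i] cD[of i] i by simp
  qed
  have hd: "\<exists>j<i. p ! j = D" if "i < length p" "p ! i = Hd" for i
  proof -
    have i: "i < n" using that len_p by simp
    then have bs: "beta_step b S (Suc i) = Hd" using that nth_p by simp
    obtain r c where rc: "r < 2" "c < b" "Suc i \<in> S (r, c)" using cover[of "Suc i"] i by auto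
    have r1: "r = 1"
    proof (rule ccontr)
      assume "r \<noteq> 1" then have "r = 0" using rc by simp
      then show False using bs_top[of c "Suc i"] rc bs by (simp split: if_splits)
    qed
    then have ne: "Suc i \<noteq> mb c" using bs_bot[of c "Suc i"] rc bs by (simp split: if_splits)
    have "mb c \<le> Suc i" using min_le rc r1 by fastforce
    then have c1: "mb c - 1 < i" using ne mb_ge1[OF rc(2)] by simp
    have "p ! (mb c - 1) = beta_step b S (mb c)" using nth_p[of "mb c - 1"] c1 i mb_ge1[OF rc(2)] by simp
    also have "\<dots> = D" using bs_bot[of c "mb c"] mb_in rc by simp
    finally show ?thesis using c1 by blast
  qed
  have nh: "num_horiz p = k"
    using len_split[of p] len_p cU_n cD_n take_n unfolding num_horiz_def cnt_def by simp
  show ?thesis unfolding Motz12_def motzkin_def using h0 hn hu hd nh len_p by auto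
qed

end


definition T :: "nat \<Rightarrow> step list \<Rightarrow> nat \<times> nat \<Rightarrow> nat set" where
  "T b q = (\<lambda>(r, c). if c < b \<and> r = 0 then
       {j. 1 \<le> j \<and> j \<le> length q \<and> q ! (j - 1) \<in> {U, Hu} \<and> cnt (\<lambda>s. s = U) q j = Suc c}
     else if c < b \<and> r = 1 then
       {j. 1 \<le> j \<and> j \<le> length q \<and> q ! (j - 1) \<in> {D, Hd} \<and> cnt (\<lambda>s. s = D) q j = Suc c}
     else {})"

context syt begin

lemma pj: "1 \<le> j \<Longrightarrow> j \<le> n \<Longrightarrow> p ! (j - 1) = beta_step b S j"
  using nth_p[of "j - 1"] by simp

lemma inv: "T b p = S"
proof (rule ext, clarify)
  fix r c
  show "T b p (r, c) = S (r, c)"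
  proof (cases "c < b \<and> r < 2")
    case False then show ?thesis using out by (auto simp: T_def)
  next
    case True
    then have c: "c < b" by simp
    show ?thesis
    proof (cases "r = 0")
      case True
      have "j \<in> T b p (0, c) \<longleftrightarrow> j \<in> S (0, c)" for j
      proof
        assume a: "j \<in> S (0, c)"
        then have jj: "1 \<le> j" "j \<le> n" using sub[of 0 c] by auto
        have "p ! (j - 1) = beta_step b S j" using pj jj by simp
        then show "j \<in> T b p (0, c)" using a jj c bs_top[of c j] cU_top[of c j] len_p
          by (auto simp: T_def)
      next
        assume a: "j \<in> T b p (0, c)"
        then have j: "1 \<le> j" "j \<le> n" "beta_step b S j \<in> {U, Hu}" "cnt (\<lambda>s. s = U) p j = Suc c"
          using c pj len_p by (auto simp: T_def)
        obtain r' c' where rc: "r' < 2" "c' < b" "j \<in> S (r', c')" using cover[of j] j by auto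
        have "r' = 0"
        proof (rule ccontr)
          assume "r' \<noteq> 0" then have "r' = 1" using rc by simp
          then show False using bs_bot[of c' j] rc j by (simp split: if_splits)
        qed
        then have "c' = c" using cU_top[of c' j] rc j by simp
        then show "j \<in> S (0, c)" using rc \<open>r' = 0\<close> by simp
      qed
      then show ?thesis using True by blast
    next
      case False
      then have r1: "r = 1" using True by simp
      have "j \<in> T b p (1, c) \<longleftrightarrow> j \<in> S (1, c)" for j
      proof
        assume a: "j \<in> S (1, c)"
        then have jj: "1 \<le> j" "j \<le> n" using sub[of 1 c] by auto
        have "p ! (j - 1) = beta_step b S j" using pj jj by simp
        then show "j \<in> T b p (1, c)" using a jj c bs_bot[of c j] cD_bot[of c j] len_p
          by (auto simp: T_def)
      next
        assume a: "j \<in> T b p (1, c)"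
        then have j: "1 \<le> j" "j \<le> n" "beta_step b S j \<in> {D, Hd}" "cnt (\<lambda>s. s = D) p j = Suc c"
          using c pj len_p by (auto simp: T_def)
        obtain r' c' where rc: "r' < 2" "c' < b" "j \<in> S (r', c')" using cover[of j] j by auto
        have "r' = 1"
        proof (rule ccontr)
          assume "r' \<noteq> 1" then have "r' = 0" using rc by simp
          then show False using bs_top[of c' j] rc j by (simp split: if_splits)
        qed
        then have "c' = c" using cD_bot[of c' j] rc j by simp
        then show "j \<in> S (1, c)" using rc \<open>r' = 1\<close> by simp
      qed
      then show ?thesis using r1 by blast
    qed
  qed
qed

end


lemma cnt_Suc_le: "cnt P xs (Suc j) \<le> Suc (cnt P xs j)"
proof (cases "j < length xs")
  case True then show ?thesis using cnt_Suc[OF True, of P] by simp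
next
  case False then show ?thesis by (simp add: cnt_def)
qed

lemma nth_beta: "i < 2 * b + k \<Longrightarrow> beta b k S ! i = beta_step b S (Suc i)"
proof -
  assume i: "i < 2 * b + k"
  have "[1..<2 * b + k + 1] ! i = 1 + i" using i by (intro nth_upt) simp
  then show ?thesis unfolding beta_def using i by (simp del: upt_Suc)
qed

lemma len_beta: "length (beta b k S) = 2 * b + k" by (simp add: beta_def del: upt_Suc)

lemma Max_Min_lt: "finite A \<Longrightarrow> A \<noteq> {} \<Longrightarrow> finite B \<Longrightarrow> B \<noteq> {} \<Longrightarrow> (\<And>x y. x \<in> A \<Longrightarrow> y \<in> B \<Longrightarrow> x < y)
  \<Longrightarrow> Max A < (Min B :: nat)"
  by simp

locale mz =
  fixes b k :: nat and q :: "step list"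
  assumes q: "q \<in> Motz12 (2 * b + k)" and nh: "num_horiz q = k"
begin

abbreviation "n \<equiv> 2 * b + k"
abbreviation "cu \<equiv> cnt (\<lambda>s. s = U) q"
abbreviation "cd \<equiv> cnt (\<lambda>s. s = D) q"
abbreviation "TT \<equiv> T b q"

lemma len: "length q = n" using q by (simp add: Motz12_def motzkin_def)

lemma nonneg: "i \<le> n \<Longrightarrow> cd i \<le> cu i"
proof -
  assume i: "i \<le> n"
  then have "height (take i q) \<ge> 0" using q len by (simp add: Motz12_def motzkin_def)
  then show ?thesis using height_cnt[of i q] by simp
qed

lemma huc: "i < n \<Longrightarrow> q ! i = Hu \<Longrightarrow> cd i < cu i"
proof -
  assume a: "i < n" "q ! i = Hu"
  then have "height (take i q) \<noteq> 0" using q len by (simp add: Motz12_def)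
  then show ?thesis using nonneg[of i] a height_cnt[of i q] by simp
qed

lemma hdc: "i < n \<Longrightarrow> q ! i = Hd \<Longrightarrow> \<exists>l<i. q ! l = D"
  using q len by (simp add: Motz12_def)

lemma tot: "cu n = b" "cd n = b"
proof -
  have tq: "take n q = q" using len by simp
  have "height q = 0" using q by (simp add: Motz12_def motzkin_def)
  then have e: "cu n = cd n" using height_cnt[of n q] tq by simp
  have "n = cu n + cd n + k" using len_split[of q] len nh tq by (simp add: cnt_def num_horiz_def)
  then show "cu n = b" "cd n = b" using e by simp_all
qed

lemma stepU: "1 \<le> j \<Longrightarrow> j \<le> n \<Longrightarrow> cu j = cu (j - 1) + (if q ! (j - 1) = U then 1 else 0)"
  using cnt_Suc[of "j - 1" q "\<lambda>s. s = U"] len by simp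
lemma stepD: "1 \<le> j \<Longrightarrow> j \<le> n \<Longrightarrow> cd j = cd (j - 1) + (if q ! (j - 1) = D then 1 else 0)"
  using cnt_Suc[of "j - 1" q "\<lambda>s. s = D"] len by simp

lemma mem0: "j \<in> TT (0, c) \<longleftrightarrow> c < b \<and> 1 \<le> j \<and> j \<le> n \<and> q ! (j - 1) \<in> {U, Hu} \<and> cu j = Suc c"
  using len by (auto simp: T_def)
lemma mem1: "j \<in> TT (Suc 0, c) \<longleftrightarrow> c < b \<and> 1 \<le> j \<and> j \<le> n \<and> q ! (j - 1) \<in> {D, Hd} \<and> cd j = Suc c"
  using len by (auto simp: T_def)
lemma memo: "r \<noteq> 0 \<Longrightarrow> r \<noteq> 1 \<Longrightarrow> TT (r, c) = {}"
  by (auto simp: T_def)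

lemma subT: "TT (r, c) \<subseteq> {1..n}"
  using len by (auto simp: T_def)
lemma finT: "finite (TT (r, c))" using subT finite_subset by blast

lemma exU: "c < b \<Longrightarrow> \<exists>u. u \<in> TT (0, c) \<and> q ! (u - 1) = U"
proof -
  assume c: "c < b"
  obtain j where j: "j \<le> n" "cu j = Suc c"
    using reach[of cu c n] cnt_Suc_le tot c by auto
  then have "j \<noteq> 0" by (metis cnt_0 nat.distinct(1))
  obtain i where i: "1 \<le> i" "i \<le> j" "q ! (i - 1) = U" "cu i = cu j"
    using exists_U[of "\<lambda>s. s = U" q j] j len by auto
  then show ?thesis using j c by (intro exI[of _ i]) (simp add: mem0)
qed

lemma exD: "c < b \<Longrightarrow> \<exists>u. u \<in> TT (1, c) \<and> q ! (u - 1) = D"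
proof -
  assume c: "c < b"
  obtain j where j: "j \<le> n" "cd j = Suc c"
    using reach[of cd c n] cnt_Suc_le tot c by auto
  obtain i where i: "1 \<le> i" "i \<le> j" "q ! (i - 1) = D" "cd i = cd j"
    using exists_U[of "\<lambda>s. s = D" q j] j len by auto
  then show ?thesis using j c by (intro exI[of _ i]) (simp add: mem1)
qed

lemma minU: "x \<in> TT (0, c) \<Longrightarrow> q ! (x - 1) = U \<Longrightarrow> Min (TT (0, c)) = x"
proof (rule Min_eqI[OF finT])
  fix y assume x: "x \<in> TT (0, c)" "q ! (x - 1) = U" and y: "y \<in> TT (0, c)"
  show "x \<le> y"
  proof (rule ccontr)
    assume "\<not> x \<le> y"
    then have "y \<le> x - 1" by simp
    then have "cu y \<le> cu (x - 1)" by (rule cnt_mono)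
    moreover have "cu x = Suc (cu (x - 1))" using stepU[of x] x mem0 by simp
    ultimately show False using x y mem0 by simp
  qed
qed

lemma minD: "x \<in> TT (1, c) \<Longrightarrow> q ! (x - 1) = D \<Longrightarrow> Min (TT (1, c)) = x"
proof (rule Min_eqI[OF finT])
  fix y assume x: "x \<in> TT (1, c)" "q ! (x - 1) = D" and y: "y \<in> TT (1, c)"
  show "x \<le> y"
  proof (rule ccontr)
    assume "\<not> x \<le> y"
    then have "y \<le> x - 1" by simp
    then have "cd y \<le> cd (x - 1)" by (rule cnt_mono)
    moreover have "cd x = Suc (cd (x - 1))" using stepD[of x] x mem1 by simp
    ultimately show False using x y mem1 by simp
  qed
qed

lemma min0: "c < b \<Longrightarrow> Min (TT (0, c)) \<in> TT (0, c) \<and> q ! (Min (TT (0, c)) - 1) = U"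
  using exU minU by metis
lemma min1: "c < b \<Longrightarrow> Min (TT (1, c)) \<in> TT (1, c) \<and> q ! (Min (TT (1, c)) - 1) = D"
  using exD minD by metis

lemma coverT: "1 \<le> j \<Longrightarrow> j \<le> n \<Longrightarrow> (q ! (j - 1) \<in> {U, Hu} \<longrightarrow> j \<in> TT (0, cu j - 1)) \<and>
   (q ! (j - 1) \<in> {D, Hd} \<longrightarrow> j \<in> TT (1, cd j - 1))"
proof -
  assume j: "1 \<le> j" "j \<le> n"
  have ub: "cu j \<le> b" "cd j \<le> b" using cnt_mono[OF j(2)] tot by metis+
  have u: "cu j \<ge> 1" if "q ! (j - 1) \<in> {U, Hu}"
  proof (cases "q ! (j - 1) = U")
    case True then show ?thesis using stepU j by simp
  next
    case False
    then have "q ! (j - 1) = Hu" using that by simp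
    then have "cd (j - 1) < cu (j - 1)" using huc[of "j - 1"] j by simp
    then show ?thesis using stepU j False by simp
  qed
  have d: "cd j \<ge> 1" if "q ! (j - 1) \<in> {D, Hd}"
  proof (cases "q ! (j - 1) = D")
    case True then show ?thesis using stepD j by simp
  next
    case False
    then have "q ! (j - 1) = Hd" using that by simp
    moreover have "j - 1 < n" using j by simp
    ultimately obtain l where l: "l < j - 1" "q ! l = D" using hdc[of "j - 1"] by blast
    then have "cd (Suc l) = cd l + 1" using cnt_Suc[of l q] len j by simp
    moreover have "cd (Suc l) \<le> cd j" using l by (intro cnt_mono) simp
    ultimately show ?thesis by simp
  qed
  show ?thesis using u d ub j by (auto simp: mem0 mem1)
qed

lemma ord00: "x \<in> TT (0, c) \<Longrightarrow> y \<in> TT (0, c') \<Longrightarrow> c < c' \<Longrightarrow> x < y"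
proof (rule ccontr)
  assume a: "x \<in> TT (0, c)" "y \<in> TT (0, c')" "c < c'" "\<not> x < y"
  then have "cu y \<le> cu x" by (intro cnt_mono) simp
  then show False using a by (simp add: mem0)
qed

lemma ord11: "x \<in> TT (1, c) \<Longrightarrow> y \<in> TT (1, c') \<Longrightarrow> c < c' \<Longrightarrow> x < y"
proof (rule ccontr)
  assume a: "x \<in> TT (1, c)" "y \<in> TT (1, c')" "c < c'" "\<not> x < y"
  then have "cd y \<le> cd x" by (intro cnt_mono) simp
  then show False using a by (simp add: mem1)
qed

lemma ord01: "x \<in> TT (0, c) \<Longrightarrow> y \<in> TT (1, c') \<Longrightarrow> c \<le> c' \<Longrightarrow> x < y"
proof (rule ccontr)
  assume a: "x \<in> TT (0, c)" "y \<in> TT (1, c')" "c \<le> c'" "\<not> x < y"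
  then have "cd y \<le> cd x" by (intro cnt_mono) simp
  then have ge: "cu x \<le> cd x" using a by (simp add: mem0 mem1)
  have x: "1 \<le> x" "x \<le> n" "q ! (x - 1) \<in> {U, Hu}" using a by (simp_all add: mem0)
  have cdx: "cd x = cd (x - 1)" using stepD[of x] x by auto
  show False
  proof (cases "q ! (x - 1) = U")
    case True
    then have "cu x = Suc (cu (x - 1))" using stepU x by simp
    moreover have "x - 1 \<le> n" using x by simp
    then have "cd (x - 1) \<le> cu (x - 1)" by (rule nonneg)
    ultimately show False using ge cdx by simp
  next
    case False
    then have "q ! (x - 1) = Hu" using x by simp
    then have "cd (x - 1) < cu (x - 1)" using huc[of "x - 1"] x by simp
    moreover have "cu x = cu (x - 1)" using stepU x False by simp
    ultimately show False using ge cdx by simp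
  qed
qed

end


context mz begin

lemma T_syt: "TT \<in> SYT_plus k [b, b]"
proof -
  have c1: "\<forall>rc\<in>cells [b, b]. TT rc \<noteq> {}"
  proof
    fix rc assume "rc \<in> cells [b, b]"
    then obtain r c where rc: "rc = (r, c)" "r < 2" "c < b" by (cases rc) (auto simp: cells_bb)
    then have "r = 0 \<or> r = 1" by auto
    then show "TT rc \<noteq> {}" using exU[of c] exD[of c] rc by auto
  qed
  have c2: "\<forall>rc. rc \<notin> cells [b, b] \<longrightarrow> TT rc = {}"
    by (auto simp: cells_bb T_def)
  have c3: "\<forall>u\<in>cells [b, b]. \<forall>v\<in>cells [b, b]. u \<noteq> v \<longrightarrow> TT u \<inter> TT v = {}"
  proof (intro ballI impI)
    fix u v assume u: "u \<in> cells [b, b]" and v: "v \<in> cells [b, b]" and uv: "u \<noteq> v"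
    obtain r c where rc: "u = (r, c)" "r < 2" using u by (cases u) (auto simp: cells_bb)
    obtain r' c' where rc': "v = (r', c')" "r' < 2" using v by (cases v) (auto simp: cells_bb)
    have "r = 0 \<or> r = 1" "r' = 0 \<or> r' = 1" using rc rc' by auto
    then show "TT u \<inter> TT v = {}" using uv rc rc' by (auto simp: mem0 mem1)
  qed
  have c4: "(\<Union>rc\<in>cells [b, b]. TT rc) = {1..sum_list [b, b] + k}"
  proof
    show "(\<Union>rc\<in>cells [b, b]. TT rc) \<subseteq> {1..sum_list [b, b] + k}"
      using subT by (auto simp: mult_2)
  next
    show "{1..sum_list [b, b] + k} \<subseteq> (\<Union>rc\<in>cells [b, b]. TT rc)"
    proof
      fix j assume "j \<in> {1..sum_list [b, b] + k}"
      then have j: "1 \<le> j" "j \<le> n" by (auto simp: mult_2)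
      show "j \<in> (\<Union>rc\<in>cells [b, b]. TT rc)"
      proof (cases "q ! (j - 1) \<in> {U, Hu}")
        case True
        then have "j \<in> TT (0, cu j - 1)" using coverT[OF j] by blast
        moreover then have "(0, cu j - 1) \<in> cells [b, b]" by (simp add: mem0 cells_bb)
        ultimately show ?thesis by blast
      next
        case False
        then have "q ! (j - 1) \<in> {D, Hd}" by (cases "q ! (j - 1)") auto
        then have "j \<in> TT (1, cd j - 1)" using coverT[OF j] by blast
        moreover then have "(1, cd j - 1) \<in> cells [b, b]" by (simp add: mem1 cells_bb)
        ultimately show ?thesis by blast
      qed
    qed
  qed
  have c5: "\<forall>u\<in>cells [b, b]. \<forall>v\<in>cells [b, b]. u \<noteq> v \<and> weakly_nw u v \<longrightarrow> Max (TT u) < Min (TT v)"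
  proof (intro ballI impI)
    fix u v assume u: "u \<in> cells [b, b]" and v: "v \<in> cells [b, b]" and uv: "u \<noteq> v \<and> weakly_nw u v"
    obtain r c where rc: "u = (r, c)" "r < 2" using u by (cases u) (auto simp: cells_bb)
    obtain r' c' where rc': "v = (r', c')" "r' < 2" using v by (cases v) (auto simp: cells_bb)
    have lt: "x < y" if "x \<in> TT u" "y \<in> TT v" for x y
    proof -
      have "r = 0 \<or> r = 1" "r' = 0 \<or> r' = 1" using rc rc' by auto
      moreover have "r \<le> r'" "c \<le> c'" using uv rc rc' by (auto simp: weakly_nw_def)
      ultimately consider "r = 0" "r' = 0" "c < c'" | "r = 0" "r' = 1" | "r = 1" "r' = 1" "c < c'"
        using uv rc rc' by fastforce
      then show ?thesis
      proof cases
        case 1 then show ?thesis using ord00 that rc rc' by simp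
      next
        case 2 then show ?thesis using ord01 that rc rc' \<open>c \<le> c'\<close> by simp
      next
        case 3 then show ?thesis using ord11 that rc rc' by simp
      qed
    qed
    show "Max (TT u) < Min (TT v)"
      by (rule Max_Min_lt) (use finT c1 u v rc rc' lt in auto)
  qed
  show ?thesis unfolding SYT_plus_def using c1 c2 c3 c4 c5 by blast
qed

lemma beta_T: "beta b k TT = q"
proof (rule nth_equalityI)
  show "length (beta b k TT) = length q" using len len_beta by simp
next
  fix i assume "i < length (beta b k TT)"
  then have i: "i < n" using len_beta by simp
  define j where "j = Suc i"
  have j: "1 \<le> j" "j \<le> n" using i j_def by auto
  have qj: "q ! (j - 1) = q ! i" using j_def by simp
  have A: "(\<exists>c<b. j = Min (TT (0, c))) \<longleftrightarrow> q ! (j - 1) = U"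
  proof
    assume "\<exists>c<b. j = Min (TT (0, c))"
    then show "q ! (j - 1) = U" using min0 by auto
  next
    assume U: "q ! (j - 1) = U"
    then have m: "j \<in> TT (0, cu j - 1)" using coverT[OF j] by simp
    then have "Min (TT (0, cu j - 1)) = j" using minU U by simp
    moreover have "cu j - 1 < b" using m by (simp add: mem0)
    ultimately show "\<exists>c<b. j = Min (TT (0, c))" by metis
  qed
  have B: "(\<exists>c<b. j = Min (TT (1, c))) \<longleftrightarrow> q ! (j - 1) = D"
  proof
    assume "\<exists>c<b. j = Min (TT (1, c))"
    then show "q ! (j - 1) = D" using min1 by auto
  next
    assume U: "q ! (j - 1) = D"
    then have m: "j \<in> TT (1, cd j - 1)" using coverT[OF j] by simp
    then have "Min (TT (1, cd j - 1)) = j" using minD U by simp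
    moreover have "cd j - 1 < b" using m by (simp add: mem1)
    ultimately show "\<exists>c<b. j = Min (TT (1, c))" by metis
  qed
  have C: "(\<exists>c<b. j \<in> TT (0, c)) \<longleftrightarrow> q ! (j - 1) \<in> {U, Hu}"
  proof
    assume "\<exists>c<b. j \<in> TT (0, c)"
    then show "q ! (j - 1) \<in> {U, Hu}" by (auto simp: mem0)
  next
    assume U: "q ! (j - 1) \<in> {U, Hu}"
    then have m: "j \<in> TT (0, cu j - 1)" using coverT[OF j] by simp
    moreover have "cu j - 1 < b" using m by (simp add: mem0)
    ultimately show "\<exists>c<b. j \<in> TT (0, c)" by blast
  qed
  have "beta b k TT ! i = beta_step b TT j" using nth_beta i j_def by simp
  also have "\<dots> = q ! (j - 1)"
    unfolding beta_step_def using A B C by (cases "q ! (j - 1)") auto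
  finally show "beta b k TT ! i = q ! i" using qj by simp
qed

end

theorem theorem11:
  fixes b k :: nat
  assumes "b \<ge> 1"
  shows "bij_betw (beta b k) (SYT_plus k [b, b])
           {p \<in> Motz12 (2 * b + k). num_horiz p = k}"
proof (rule bij_betw_byWitness[where f' = "T b"])
  show "\<forall>S\<in>SYT_plus k [b, b]. T b (beta b k S) = S"
    using syt.inv syt.intro by blast
  show "\<forall>q\<in>{p \<in> Motz12 (2 * b + k). num_horiz p = k}. beta b k (T b q) = q"
    using mz.beta_T mz.intro by blast
  show "beta b k ` SYT_plus k [b, b] \<subseteq> {p \<in> Motz12 (2 * b + k). num_horiz p = k}"
    using syt.into syt.intro by blast
  show "T b ` {p \<in> Motz12 (2 * b + k). num_horiz p = k} \<subseteq> SYT_plus k [b, b]"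
    using mz.T_syt mz.intro by blast
qed


end
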